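(* Let $n\ge1$, $\boldsymbol\mu\in\mathcal S_n^\uparrow$, $\boldsymbol\xi\in\mathbb R^n$, $\mathbf y=\boldsymbol\mu+\boldsymbol\xi$ and $\hat{\boldsymbol\mu}=\Pi_{\mathcal S_n^\uparrow}(\mathbf y)$. Let $(\hat T_1,\dots,\hat T_{\hat k})$, $\hat k=k(\hat{\boldsymbol\mu})$, be the partition of $\{1,\dots,n\}$ into the maximal sets of consecutive indices on which $\hat{\boldsymbol\mu}$ is constant. Then $$\|\hat{\boldsymbol\mu}-\boldsymbol\mu\|_2^2\le\sum_{j=1}^{\hat k}\big\|\Pi_{\mathcal S^\downarrow_{|\hat T_j|}}(\boldsymbol\xi_{\hat T_j})\big\|_2^2 .$$
   Context: $\mathcal S_m^\uparrow=\{\mathbf u\in\mathbb R^m:u_1\le\dots\le u_m\}$, $\mathcal S_m^\downarrow=-\mathcal S_m^\uparrow$ (nonincreasing sequences), with $\mathcal S_1^\uparrow=\mathbb R$. $\Pi_K$ is the Euclidean projection onto $K$. For $T=\{t_1<\dots<t_{|T|}\}$, $\boldsymbol\xi_T=(\xi_{t_1},\dots,\xi_{t_{|T|}})^T$. $k(\mathbf u)$ is the number of distinct coordinates of $\mathbf u$. *)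

theory Defs
  imports Complex_Main
begin

text \<open>Vectors in R^m are represented as real lists of length m (index i ranges over 0..<m).\<close>

definition sq_norm :: "real list \<Rightarrow> real" where
  "sq_norm v = sum_list (map (\<lambda>x. x ^ 2) v)"

definition vdiff :: "real list \<Rightarrow> real list \<Rightarrow> real list" where
  "vdiff u v = map2 (-) u v"

definition vadd :: "real list \<Rightarrow> real list \<Rightarrow> real list" where
  "vadd u v = map2 (+) u v"

definition S_up :: "nat \<Rightarrow> real list set" where
  "S_up m = {u. length u = m \<and> sorted u}"

definition S_down :: "nat \<Rightarrow> real list set" where
  "S_down m = {u. length u = m \<and> sorted_wrt (\<ge>) u}"

definition proj :: "real list set \<Rightarrow> real list \<Rightarrow> real list" where
  "proj K y = (THE p. p \<in> K \<and> (\<forall>q\<in>K. sq_norm (vdiff y p) \<le> sq_norm (vdiff y q)))"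

definition subvec :: "real list \<Rightarrow> nat set \<Rightarrow> real list" where
  "subvec xi T = map (nth xi) (sorted_list_of_set T)"

definition const_blocks :: "real list \<Rightarrow> nat set set" where
  "const_blocks u = {{a..<b} | a b. a < b \<and> b \<le> length u
      \<and> (\<forall>i\<in>{a..<b}. u ! i = u ! a)
      \<and> (a = 0 \<or> u ! (a - 1) \<noteq> u ! a)
      \<and> (b = length u \<or> u ! b \<noteq> u ! a)}"

end

theory Submission
  imports Defs "HOL-Analysis.Analysis"
begin

lemma sq_norm_nth: "sq_norm u = (\<Sum>i<length u. (u!i)^2)"
  unfolding sq_norm_def by (simp add: sum_list_sum_nth atLeast0LessThan)

lemma sq_norm_vdiff:
  assumes "length u = m" "length v = m"
  shows "sq_norm (vdiff u v) = (\<Sum>i<m. (u!i - v!i)^2)"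
  using assms unfolding vdiff_def by (simp add: sq_norm_nth)

lemma exists_min_up:
  assumes "length y = m"
  shows "\<exists>p\<in>S_up m. \<forall>q\<in>S_up m. sq_norm (vdiff y p) \<le> sq_norm (vdiff y q)"
proof (cases "m = 0")
  case True
  then show ?thesis using assms by (auto simp: S_up_def sq_norm_def vdiff_def)
next
  case False
  define a where "a = Min (set y)"
  define b where "b = Max (set y)"
  have yab: "a \<le> y!i \<and> y!i \<le> b" if "i < m" for i
    using that assms False unfolding a_def b_def by auto
  define X where "X = product_topology (\<lambda>_. euclideanreal) {..<m}"
  define B where "B = PiE {..<m} (\<lambda>_. {a..b})"
  define h where "h = (\<lambda>f::nat\<Rightarrow>real. \<Sum>i<m-1. max 0 (f i - f (Suc i)))"
  define C where "C = {f \<in> topspace X. h f \<in> {0}}"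
  define F where "F = (\<lambda>f::nat\<Rightarrow>real. \<Sum>i<m. (y!i - f i)^2)"
  have cB: "compactin X B" unfolding X_def B_def
    by (simp add: compactin_PiE)
  have proj: "continuous_map X euclideanreal (\<lambda>f. f i)" if "i < m" for i
    unfolding X_def using continuous_map_product_projection[of i "{..<m}" "\<lambda>_. euclideanreal"] that by simp
  have ch: "continuous_map X euclideanreal h" unfolding h_def
    by (intro continuous_map_sum continuous_map_real_max continuous_map_diff continuous_map_const[THEN iffD2] proj) auto
  have cC: "closedin X C" unfolding C_def
    by (rule closedin_continuous_map_preimage[OF ch]) simp
  have cS: "compactin X (B \<inter> C)" by (rule compact_Int_closedin[OF cB cC])
  have cF: "continuous_map X euclideanreal F" unfolding F_def
    by (intro continuous_map_sum continuous_map_real_pow continuous_map_diff continuous_map_const[THEN iffD2] proj) auto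
  have "compact (F ` (B \<inter> C))"
    using image_compactin[OF cS cF] by (simp add: compactin_euclidean_iff)
  have hzero: "h f = 0 \<longleftrightarrow> (\<forall>i. Suc i < m \<longrightarrow> f i \<le> f (Suc i))" for f
  proof -
    have "h f = 0 \<longleftrightarrow> (\<forall>i\<in>{..<m-1}. max 0 (f i - f (Suc i)) = 0)"
      unfolding h_def by (rule sum_nonneg_eq_0_iff) auto
    also have "\<dots> \<longleftrightarrow> (\<forall>i. Suc i < m \<longrightarrow> f i \<le> f (Suc i))"
    proof (intro iffI allI impI ballI)
      fix i assume H: "\<forall>i\<in>{..<m-1}. max 0 (f i - f (Suc i)) = 0" and "Suc i < m"
      then have "i \<in> {..<m-1}" by auto
      with H have "max 0 (f i - f (Suc i)) = 0" by blast
      then show "f i \<le> f (Suc i)" by (simp add: max_def split: if_splits)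
    next
      fix i assume H: "\<forall>i. Suc i < m \<longrightarrow> f i \<le> f (Suc i)" and "i \<in> {..<m-1}"
      then have "f i \<le> f (Suc i)" by auto
      then show "max 0 (f i - f (Suc i)) = 0" by simp
    qed
    finally show ?thesis .
  qed
  have topX: "topspace X = PiE {..<m} (\<lambda>_. UNIV)" unfolding X_def by simp
  have mem: "restrict g {..<m} \<in> B \<inter> C" if "\<And>i. i < m \<Longrightarrow> g i \<in> {a..b}"
     "\<And>i. Suc i < m \<Longrightarrow> g i \<le> g (Suc i)" for g
    using that unfolding B_def C_def topX by (auto simp: hzero)
  have ab: "a \<le> b" using yab[of 0] False by auto
  have ne: "B \<inter> C \<noteq> {}" using mem[of "\<lambda>_. a"] ab by auto
  obtain f0 where f0: "f0 \<in> B \<inter> C" "\<And>f. f \<in> B \<inter> C \<Longrightarrow> F f0 \<le> F f"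
    using compact_attains_inf[OF \<open>compact (F ` (B \<inter> C))\<close>] ne by auto
  define p where "p = map f0 [0..<m]"
  have "p \<in> S_up m" unfolding p_def S_up_def using f0(1) unfolding C_def
    by (auto simp: hzero sorted_iff_nth_Suc)
  moreover have "sq_norm (vdiff y p) \<le> sq_norm (vdiff y q)" if q: "q \<in> S_up m" for q
  proof -
    have lq: "length q = m" and sq: "sorted q" using q by (auto simp: S_up_def)
    define g where "g = (\<lambda>i. max a (min b (q!i)))"
    have "restrict g {..<m} \<in> B \<inter> C"
    proof (rule mem)
      fix i assume "i < m" then show "g i \<in> {a..b}" using ab by (auto simp: g_def)
    next
      fix i assume "Suc i < m" then show "g i \<le> g (Suc i)" using sq lq
        by (auto simp: g_def sorted_iff_nth_Suc max_def min_def)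
    qed
    then have "F f0 \<le> F (restrict g {..<m})" by (rule f0(2))
    also have "\<dots> \<le> (\<Sum>i<m. (y!i - q!i)^2)" unfolding F_def
    proof (rule sum_mono)
      fix i assume i: "i \<in> {..<m}"
      then have "\<bar>y!i - g i\<bar> \<le> \<bar>y!i - q!i\<bar>" using yab[of i] by (auto simp: g_def max_def min_def)
      then show "(y ! i - restrict g {..<m} i)\<^sup>2 \<le> (y ! i - q ! i)\<^sup>2" using i
        by (simp add: abs_le_square_iff)
    qed
    finally show ?thesis using assms lq by (simp add: sq_norm_vdiff p_def F_def)
  qed
  ultimately show ?thesis by blast
qed

definition ismin :: "real list set \<Rightarrow> real list \<Rightarrow> real list \<Rightarrow> bool" where
  "ismin K y p \<longleftrightarrow> p \<in> K \<and> (\<forall>q\<in>K. sq_norm (vdiff y p) \<le> sq_norm (vdiff y q))"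

lemma min_unique:
  assumes K: "\<And>u. u \<in> K \<Longrightarrow> length u = m"
    "\<And>u v. u \<in> K \<Longrightarrow> v \<in> K \<Longrightarrow> map2 (\<lambda>a b. (a+b)/2) u v \<in> K"
    and ly: "length y = m" and p: "ismin K y p" and q: "ismin K y q"
  shows "p = q"
proof -
  define r where "r = map2 (\<lambda>a b. (a+b)/2) p q"
  have pK: "p \<in> K" and qK: "q \<in> K" using p q by (auto simp: ismin_def)
  have lp: "length p = m" and lq: "length q = m" using K(1) pK qK by auto
  have rK: "r \<in> K" unfolding r_def using K(2) pK qK by auto
  have lr: "length r = m" using K(1) rK by auto
  have rn: "r!i = (p!i + q!i)/2" if "i < m" for i using that lp lq by (simp add: r_def)
  let ?D = "\<lambda>v. (\<Sum>i<m. (y!i - v!i)^2)"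
  have Dpq: "?D p \<le> ?D q" "?D q \<le> ?D p" "?D p \<le> ?D r"
    using p q qK pK rK ly lp lq lr unfolding ismin_def by (auto simp: sq_norm_vdiff)
  have "?D r = (?D p + ?D q)/2 - (\<Sum>i<m. (p!i - q!i)^2)/4"
    by (simp add: rn sum_divide_distrib sum_subtractf[symmetric] sum.distrib[symmetric] power2_eq_square
          algebra_simps add_divide_distrib diff_divide_distrib)
  note e = this
  have s: "(\<Sum>i<m. (p!i - q!i)^2) \<le> 0"
  proof -
    define A where "A = ?D p"
    define Bq where "Bq = ?D q"
    define Cr where "Cr = ?D r"
    define S where "S = (\<Sum>i<m. (p!i - q!i)^2)"
    have "A \<le> Bq" "Bq \<le> A" "A \<le> Cr" "Cr = (A + Bq)/2 - S/4"
      using Dpq e unfolding A_def Bq_def Cr_def S_def by auto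
    then have "S \<le> 0" by (simp add: field_simps)
    then show ?thesis unfolding S_def .
  qed
  have s0: "(\<Sum>i<m. (p!i - q!i)^2) = 0" 
  proof -
    have "0 \<le> (\<Sum>i<m. (p!i - q!i)^2)" by (rule sum_nonneg) simp
    with s show ?thesis by linarith
  qed
  have "\<forall>i\<in>{..<m}. (p!i - q!i)^2 = 0"
    using s0 by (subst (asm) sum_nonneg_eq_0_iff) auto
  then show ?thesis using lp lq by (auto intro: nth_equalityI)
qed

lemma proj_ismin:
  assumes "\<exists>p. ismin K y p" "\<And>p q. ismin K y p \<Longrightarrow> ismin K y q \<Longrightarrow> p = q"
  shows "ismin K y (proj K y)"
proof -
  have "proj K y = (THE p. ismin K y p)" unfolding proj_def ismin_def by simp
  then show ?thesis using assms by (metis theI)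
qed

lemma mid_up: "u \<in> S_up m \<Longrightarrow> v \<in> S_up m \<Longrightarrow> map2 (\<lambda>a b. (a+b)/2) u v \<in> S_up m"
  by (auto simp: S_up_def sorted_iff_nth_mono intro!: divide_right_mono add_mono)

lemma mid_down: "u \<in> S_down m \<Longrightarrow> v \<in> S_down m \<Longrightarrow> map2 (\<lambda>a b. (a+b)/2) u v \<in> S_down m"
  by (auto simp: S_down_def sorted_wrt_iff_nth_less intro!: divide_right_mono add_mono)

lemma proj_up: assumes "length y = m" shows "ismin (S_up m) y (proj (S_up m) y)"
proof (rule proj_ismin)
  show "\<exists>p. ismin (S_up m) y p" using exists_min_up[OF assms] by (auto simp: ismin_def)
next
  fix p q assume "ismin (S_up m) y p" "ismin (S_up m) y q"
  then show "p = q" using min_unique[OF _ mid_up assms, where p=p and q=q] by (auto simp: S_up_def)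
qed

lemma neg_vdiff: "sq_norm (vdiff (map uminus x) (map uminus p)) = sq_norm (vdiff x p)"
  unfolding sq_norm_def vdiff_def
  by (induction x arbitrary: p) (auto simp: zip_Cons1 power2_eq_square algebra_simps split: list.splits)

lemma neg_down: "map uminus u \<in> S_up m \<longleftrightarrow> u \<in> S_down m"
  by (auto simp: S_up_def S_down_def sorted_iff_nth_mono sorted_wrt_iff_nth_less)

lemma proj_down: assumes "length y = m" shows "ismin (S_down m) y (proj (S_down m) y)"
proof (rule proj_ismin)
  obtain p where p: "p \<in> S_up m" "\<forall>q\<in>S_up m. sq_norm (vdiff (map uminus y) p) \<le> sq_norm (vdiff (map uminus y) q)"
    using exists_min_up[of "map uminus y" m] assms by auto
  have "ismin (S_down m) y (map uminus p)" unfolding ismin_def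
  proof safe
    show "map uminus p \<in> S_down m" using p(1) neg_down[of "map uminus p"] by simp
    fix q assume "q \<in> S_down m"
    then have "map uminus q \<in> S_up m" by (simp add: neg_down)
    with p(2) have "sq_norm (vdiff (map uminus y) p) \<le> sq_norm (vdiff (map uminus y) (map uminus q))" by blast
    then show "sq_norm (vdiff y (map uminus p)) \<le> sq_norm (vdiff y q)"
      using neg_vdiff[of y q] neg_vdiff[of "map uminus y" p] by simp
  qed
  then show "\<exists>p. ismin (S_down m) y p" by blast
next
  fix p q assume "ismin (S_down m) y p" "ismin (S_down m) y q"
  then show "p = q" using min_unique[OF _ mid_down assms, where p=p and q=q] by (auto simp: S_down_def)
qed

lemma small_t:
  fixes a0 b0 d :: real
  assumes d: "d > 0" and B: "b0 \<ge> 0" and H: "\<And>t. 0 < t \<Longrightarrow> t \<le> d \<Longrightarrow> 0 \<le> 2*t*a0 + b0*t^2"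
  shows "a0 \<ge> 0"
proof (rule ccontr)
  assume "\<not> a0 \<ge> 0" then have A: "a0 < 0" by simp
  show False
  proof (cases "b0 = 0")
    case True
    have "a0*d < 0" using A d by (simp add: mult_neg_pos)
    then show False using H[of d] d True by simp
  next
    case False
    then have Bp: "b0 > 0" using B by simp
    define t where "t = min d (-a0/b0)"
    have s0: "t > 0" using d A Bp by (simp add: t_def divide_neg_pos)
    have "b0*t \<le> -a0" using Bp by (simp add: t_def min_def field_simps split: if_splits)
    then have "2*a0 + b0*t < 0" using A by linarith
    then have "t * (2*a0 + b0*t) < 0" using s0 by (simp add: mult_pos_neg)
    moreover have "0 \<le> 2*t*a0 + b0*t^2" using H[of t] s0 by (simp add: t_def)
    ultimately show False by (simp add: power2_eq_square algebra_simps)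
  qed
qed

lemma cone_bound:
  assumes lx: "length x = m" and v: "v \<in> S_down m"
    and ip: "(\<Sum>i<m. x!i * v!i) \<ge> (\<Sum>i<m. (v!i)^2)"
  shows "(\<Sum>i<m. (v!i)^2) \<le> sq_norm (proj (S_down m) x)"
proof -
  define p where "p = proj (S_down m) x"
  have pm: "ismin (S_down m) x p" unfolding p_def by (rule proj_down[OF lx])
  have pK: "p \<in> S_down m" using pm by (simp add: ismin_def)
  have lp: "length p = m" and lv: "length v = m" using pK v by (auto simp: S_down_def)
  have key: "0 \<le> 2*t*(\<Sum>i<m. (x!i - p!i) * v!i) * (-1) + (\<Sum>i<m. (v!i)^2) * t^2" if s: "0 < t" for t
  proof -
    define q where "q = map (\<lambda>i. p!i + t * v!i) [0..<m]"
    have qK: "q \<in> S_down m" using pK v s unfolding q_def S_down_def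
      by (auto simp: sorted_wrt_iff_nth_less intro!: add_mono mult_left_mono)
    have "sq_norm (vdiff x p) \<le> sq_norm (vdiff x q)" using pm qK by (simp add: ismin_def)
    then have "(\<Sum>i<m. (x!i - p!i)^2) \<le> (\<Sum>i<m. (x!i - q!i)^2)"
      using lx lp by (simp add: sq_norm_vdiff q_def)
    also have "\<dots> = (\<Sum>i<m. (x!i - p!i)^2 - 2*t*((x!i - p!i) * v!i) + t^2 * (v!i)^2)"
      by (intro sum.cong) (auto simp: q_def power2_eq_square algebra_simps)
    also have "\<dots> = (\<Sum>i<m. (x!i - p!i)^2) - 2*t*(\<Sum>i<m. (x!i - p!i) * v!i) + t^2 * (\<Sum>i<m. (v!i)^2)"
      by (simp add: sum.distrib sum_subtractf sum_distrib_left)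
    finally show ?thesis by (simp add: algebra_simps)
  qed
  have "0 \<le> -(\<Sum>i<m. (x!i - p!i) * v!i)"
  proof (rule small_t[of 1 "\<Sum>i<m. (v!i)^2"])
    fix t :: real assume "0 < t"
    from key[OF this] show "0 \<le> 2 * t * - (\<Sum>i<m. (x!i - p!i) * v!i) + (\<Sum>i<m. (v!i)^2) * t^2"
      by simp
  qed (auto intro: sum_nonneg)
  then have pv: "(\<Sum>i<m. p!i * v!i) \<ge> (\<Sum>i<m. x!i * v!i)"
    by (simp add: left_diff_distrib sum_subtractf)
  have "0 \<le> (\<Sum>i<m. (p!i - v!i)^2)" by (rule sum_nonneg) simp
  also have "\<dots> = (\<Sum>i<m. (p!i)^2) - 2 * (\<Sum>i<m. p!i * v!i) + (\<Sum>i<m. (v!i)^2)"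
    by (simp add: power2_eq_square algebra_simps sum.distrib sum_subtractf sum_distrib_left)
  finally have "(\<Sum>i<m. (v!i)^2) \<le> (\<Sum>i<m. (p!i)^2)" using pv ip by linarith
  then show ?thesis using lp by (simp add: p_def[symmetric] sq_norm_nth)
qed

lemma perturb:
  assumes pm: "ismin (S_up n) y p" and ly: "length y = n" and S: "S \<subseteq> {..<n}"
    and qK: "map (\<lambda>i. if i \<in> S then p!i + t else p!i) [0..<n] \<in> S_up n"
  shows "0 \<le> -2*t*(\<Sum>i\<in>S. y!i - p!i) + real (card S) * t^2"
proof -
  define q where "q = map (\<lambda>i. if i \<in> S then p!i + t else p!i) [0..<n]"
  have lp: "length p = n" using pm by (simp add: ismin_def S_up_def)
  have "sq_norm (vdiff y p) \<le> sq_norm (vdiff y q)" using pm qK by (simp add: ismin_def q_def)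
  then have "(\<Sum>i<n. (y!i - p!i)^2) \<le> (\<Sum>i<n. (y!i - q!i)^2)"
    using ly lp by (simp add: sq_norm_vdiff q_def)
  also have "\<dots> = (\<Sum>i<n. (y!i - p!i)^2 + (if i \<in> S then -2*t*(y!i - p!i) + t^2 else 0))"
    by (intro sum.cong) (auto simp: q_def power2_eq_square algebra_simps)
  also have "\<dots> = (\<Sum>i<n. (y!i - p!i)^2) + (\<Sum>i\<in>S. -2*t*(y!i - p!i) + t^2)"
    using S by (simp add: sum.distrib sum.If_cases Int_absorb1)
  also have "(\<Sum>i\<in>S. -2*t*(y!i - p!i) + t^2) = -2*t*(\<Sum>i\<in>S. y!i - p!i) + real (card S) * t^2"
    by (subst sum.distrib) (simp add: sum_negf sum_distrib_left[symmetric])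
  finally show ?thesis by simp
qed

lemma block_sums:
  assumes pm: "ismin (S_up n) y p" and ly: "length y = n"
    and ab: "a < b" "b \<le> n" and c: "\<forall>i\<in>{a..<b}. p!i = p!a"
    and la: "a = 0 \<or> p!(a-1) \<noteq> p!a" and rb: "b = n \<or> p!b \<noteq> p!a"
  shows "\<And>k. a < k \<Longrightarrow> k \<le> b \<Longrightarrow> 0 \<le> (\<Sum>i\<in>{a..<k}. y!i - p!a)"
    and "(\<Sum>i\<in>{a..<b}. y!i - p!a) \<le> 0"
proof -
  have lp: "length p = n" and sp: "sorted p" using pm by (auto simp: ismin_def S_up_def)
  have cc: "p!i = p!a" if "a \<le> i" "i < b" for i using c that atLeastLessThan_iff by blast
  have mono: "p!i \<le> p!j" if "i \<le> j" "j < n" for i j using sp lp that by (simp add: sorted_nth_mono)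
  {
    fix k assume k: "a < k" "k \<le> b"
    define d where "d = (if a = 0 then 1 else p!a - p!(a-1))"
    have d0: "d > 0" using la mono[of "a-1" a] ab by (auto simp: d_def)
    have dd: "a > 0 \<Longrightarrow> p!(a-1) + d = p!a" by (simp add: d_def)
    have "0 \<le> 2*t*(\<Sum>i\<in>{a..<k}. y!i - p!a) + real (card {a..<k}) * t^2" if t: "0 < t" "t \<le> d" for t
    proof -
      define F where "F = (\<lambda>i. if i \<in> {a..<k} then p!i + (-t) else p!i)"
      have qF: "map F [0..<n] \<in> S_up n"
        unfolding S_up_def sorted_iff_nth_Suc
      proof (intro CollectI conjI allI impI)
        fix i assume i: "Suc i < length (map F [0..<n])"
        then have i': "Suc i < n" by simp
        have m1: "p!i \<le> p!Suc i" using mono[of i "Suc i"] i' by simp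
        have "F i \<le> F (Suc i)"
        proof (cases "Suc i = a")
          case True
          then have "i \<notin> {a..<k}" "Suc i \<in> {a..<k}" "a > 0" "i = a - 1" using k by auto
          then show ?thesis using dd t by (auto simp: F_def)
        next
          case False
          then show ?thesis using m1 t by (auto simp: F_def)
        qed
        then show "map F [0..<n] ! i \<le> map F [0..<n] ! Suc i"
          using i' by simp
      qed simp
      have sub: "{a..<k} \<subseteq> {..<n}" using k ab by auto
      have "0 \<le> -2*(-t)*(\<Sum>i\<in>{a..<k}. y!i - p!i) + real (card {a..<k}) * (-t)^2"
        by (rule perturb[OF pm ly sub qF[unfolded F_def]])
      moreover have "(\<Sum>i\<in>{a..<k}. y!i - p!i) = (\<Sum>i\<in>{a..<k}. y!i - p!a)"
      proof (rule sum.cong[OF refl])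
        fix i assume "i \<in> {a..<k}"
        then have "p!i = p!a" using k by (intro cc) auto
        then show "y!i - p!i = y!i - p!a" by simp
      qed
      ultimately show ?thesis by simp
    qed
    note H = this
    show "0 \<le> (\<Sum>i\<in>{a..<k}. y!i - p!a)"
      by (rule small_t[OF d0 _ H]) simp
  }
  {
    define d where "d = (if b = n then 1 else p!b - p!a)"
    have d0: "d > 0" using rb mono[of "b-1" b] ab cc[of "b-1"] by (auto simp: d_def)
    have dd: "b < n \<Longrightarrow> p!a + d = p!b" by (simp add: d_def)
    have "0 \<le> 2*t*(-(\<Sum>i\<in>{a..<b}. y!i - p!a)) + real (card {a..<b}) * t^2" if t: "0 < t" "t \<le> d" for t
    proof -
      define F where "F = (\<lambda>i. if i \<in> {a..<b} then p!i + t else p!i)"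
      have qF: "map F [0..<n] \<in> S_up n"
        unfolding S_up_def sorted_iff_nth_Suc
      proof (intro CollectI conjI allI impI)
        fix i assume i: "Suc i < length (map F [0..<n])"
        then have i': "Suc i < n" by simp
        have m1: "p!i \<le> p!Suc i" using mono[of i "Suc i"] i' by simp
        have "F i \<le> F (Suc i)"
        proof (cases "Suc i = b")
          case True
          then have "i \<in> {a..<b}" "Suc i \<notin> {a..<b}" "b < n" "p!i = p!a" using ab i' cc[of i] by auto
          then show ?thesis using dd t True by (auto simp: F_def)
        next
          case False
          then show ?thesis using m1 t by (auto simp: F_def)
        qed
        then show "map F [0..<n] ! i \<le> map F [0..<n] ! Suc i"
          using i' by simp
      qed simp
      have sub: "{a..<b} \<subseteq> {..<n}" using ab by auto
      have "0 \<le> -2*t*(\<Sum>i\<in>{a..<b}. y!i - p!i) + real (card {a..<b}) * t^2"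
        by (rule perturb[OF pm ly sub qF[unfolded F_def]])
      moreover have "(\<Sum>i\<in>{a..<b}. y!i - p!i) = (\<Sum>i\<in>{a..<b}. y!i - p!a)"
      proof (rule sum.cong[OF refl])
        fix i assume "i \<in> {a..<b}"
        then have "p!i = p!a" by (intro cc) auto
        then show "y!i - p!i = y!i - p!a" by simp
      qed
      ultimately show ?thesis by simp
    qed
    note H = this
    have "0 \<le> -(\<Sum>i\<in>{a..<b}. y!i - p!a)"
      by (rule small_t[OF d0 _ H]) simp
    then show "(\<Sum>i\<in>{a..<b}. y!i - p!a) \<le> 0" by simp
  }
qed

lemma reidx: assumes "a \<le> b" shows "(\<Sum>i\<in>{a..<b}. f i) = (\<Sum>j<b-a. f (a+j::nat)::real)"
proof -
  have "(\<Sum>i\<in>{0+a..<(b-a)+a}. f i) = (\<Sum>j\<in>{0..<b-a}. f (j+a))" by (rule sum.shift_bounds_nat_ivl)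
  then show ?thesis using assms by (simp add: atLeast0LessThan add.commute)
qed

lemma abel:
  fixes z w :: "nat \<Rightarrow> real"
  assumes Z: "\<And>k. a < k \<Longrightarrow> k \<le> b \<Longrightarrow> 0 \<le> (\<Sum>i\<in>{a..<k}. z i)"
    and M: "\<And>i j. a \<le> i \<Longrightarrow> i \<le> j \<Longrightarrow> j < b \<Longrightarrow> w i \<le> w j" and ab: "a < b"
  shows "(\<Sum>i\<in>{a..<b}. z i * w i) \<le> (\<Sum>i\<in>{a..<b}. z i) * w (b - 1)"
proof -
  have "a + Suc d \<le> b \<longrightarrow> (\<Sum>i\<in>{a..<a + Suc d}. z i * w i) \<le> (\<Sum>i\<in>{a..<a + Suc d}. z i) * w (a + d)" for d
  proof (induction d)
    case 0
    then show ?case by simp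
  next
    case (Suc d)
    show ?case
    proof
      assume le: "a + Suc (Suc d) \<le> b"
      have IH: "(\<Sum>i\<in>{a..<a + Suc d}. z i * w i) \<le> (\<Sum>i\<in>{a..<a + Suc d}. z i) * w (a + d)"
        using Suc.IH le by simp
      have Z0: "0 \<le> (\<Sum>i\<in>{a..<a + Suc d}. z i)" using Z[of "a + Suc d"] le by simp
      have Mw: "w (a + d) \<le> w (a + Suc d)" using M[of "a + d" "a + Suc d"] le by simp
      have "(\<Sum>i\<in>{a..<a + Suc (Suc d)}. z i * w i) = (\<Sum>i\<in>{a..<a + Suc d}. z i * w i) + z (a + Suc d) * w (a + Suc d)"
        using sum.atLeastLessThan_Suc[of a "a + Suc d" "\<lambda>i. z i * w i"] by simp
      also have "\<dots> \<le> (\<Sum>i\<in>{a..<a + Suc d}. z i) * w (a + d) + z (a + Suc d) * w (a + Suc d)"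
        using IH by simp
      also have "\<dots> \<le> (\<Sum>i\<in>{a..<a + Suc d}. z i) * w (a + Suc d) + z (a + Suc d) * w (a + Suc d)"
        using mult_left_mono[OF Mw Z0] by simp
      also have "\<dots> = (\<Sum>i\<in>{a..<a + Suc (Suc d)}. z i) * w (a + Suc d)"
        using sum.atLeastLessThan_Suc[of a "a + Suc d" z] by (simp add: algebra_simps)
      finally show "(\<Sum>i\<in>{a..<a + Suc (Suc d)}. z i * w i) \<le> (\<Sum>i\<in>{a..<a + Suc (Suc d)}. z i) * w (a + Suc d)" .
    qed
  qed
  from this[of "b - a - 1"] ab show ?thesis by simp
qed

lemma block_bound:
  assumes pm: "ismin (S_up n) y p" and ly: "length y = n"
    and mu: "mu \<in> S_up n" and lxi: "length xi = n" and yd: "\<And>i. i < n \<Longrightarrow> y!i = mu!i + xi!i"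
    and ab: "a < b" "b \<le> n" and c: "\<forall>i\<in>{a..<b}. p!i = p!a"
    and la: "a = 0 \<or> p!(a-1) \<noteq> p!a" and rb: "b = n \<or> p!b \<noteq> p!a"
  shows "(\<Sum>i\<in>{a..<b}. (p!i - mu!i)^2) \<le> sq_norm (proj (S_down (b-a)) (map ((!) xi) [a..<b]))"
proof -
  define m where "m = b - a"
  define cst where "cst = p!a"
  define x where "x = map ((!) xi) [a..<b]"
  define v where "v = map (\<lambda>i. cst - mu!i) [a..<b]"
  have cc: "p!i = p!a" if "a \<le> i" "i < b" for i using c that atLeastLessThan_iff by blast
  have lmu: "length mu = n" and smu: "sorted mu" using mu by (auto simp: S_up_def)
  have lx: "length x = m" and lv: "length v = m" by (auto simp: x_def v_def m_def)
  have xn: "x!j = xi!(a+j)" if "j < m" for j using that by (simp add: x_def m_def)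
  have vn: "v!j = cst - mu!(a+j)" if "j < m" for j using that by (simp add: v_def m_def)
  have vK: "v \<in> S_down m" unfolding S_down_def
  proof (intro CollectI conjI)
    show "length v = m" by (rule lv)
    show "sorted_wrt (\<ge>) v" unfolding sorted_wrt_iff_nth_less
    proof (intro allI impI)
      fix i j assume "i < j" "j < length v"
      then have "mu!(a+i) \<le> mu!(a+j)" using smu lmu lv ab by (intro sorted_nth_mono) (auto simp: m_def)
      then show "v!i \<ge> v!j" using \<open>i < j\<close> \<open>j < length v\<close> lv by (simp add: vn)
    qed
  qed
  note bs = block_sums[OF pm ly ab c la rb]
  have tot: "(\<Sum>i\<in>{a..<b}. y!i - cst) = 0" using bs(1)[of b] bs(2) ab unfolding cst_def by simp
  have ab_le: "(\<Sum>i\<in>{a..<b}. (y!i - cst) * mu!i) \<le> (\<Sum>i\<in>{a..<b}. y!i - cst) * mu!(b-1)"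
  proof (rule abel)
    show "\<And>k. a < k \<Longrightarrow> k \<le> b \<Longrightarrow> 0 \<le> (\<Sum>i\<in>{a..<k}. y!i - cst)" using bs(1) unfolding cst_def by simp
    show "\<And>i j. a \<le> i \<Longrightarrow> i \<le> j \<Longrightarrow> j < b \<Longrightarrow> mu!i \<le> mu!j"
      using smu lmu ab by (auto intro: sorted_nth_mono)
  qed (rule ab)
  with tot have zm: "(\<Sum>i\<in>{a..<b}. (y!i - cst) * mu!i) \<le> 0" by simp
  have "(\<Sum>i\<in>{a..<b}. xi!i * (cst - mu!i)) - (\<Sum>i\<in>{a..<b}. (cst - mu!i)^2)
      = (\<Sum>i\<in>{a..<b}. cst * (y!i - cst) - (y!i - cst) * mu!i)"
    unfolding sum_subtractf[symmetric]
    by (intro sum.cong refl) (use yd ab in \<open>auto simp: power2_eq_square algebra_simps\<close>)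
  also have "\<dots> = cst * (\<Sum>i\<in>{a..<b}. y!i - cst) - (\<Sum>i\<in>{a..<b}. (y!i - cst) * mu!i)"
    by (subst sum_subtractf) (subst sum_distrib_left, rule refl)
  finally have ip0: "(\<Sum>i\<in>{a..<b}. xi!i * (cst - mu!i)) \<ge> (\<Sum>i\<in>{a..<b}. (cst - mu!i)^2)"
    using tot zm by simp
  have e1: "(\<Sum>j<m. x!j * v!j) = (\<Sum>i\<in>{a..<b}. xi!i * (cst - mu!i))"
    using reidx[of a b "\<lambda>i. xi!i * (cst - mu!i)"] ab by (simp add: m_def xn vn)
  have e2: "(\<Sum>j<m. (v!j)^2) = (\<Sum>i\<in>{a..<b}. (cst - mu!i)^2)"
    using reidx[of a b "\<lambda>i. (cst - mu!i)^2"] ab by (simp add: m_def vn)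
  have e3: "(\<Sum>i\<in>{a..<b}. (cst - mu!i)^2) = (\<Sum>i\<in>{a..<b}. (p!i - mu!i)^2)"
  proof (rule sum.cong[OF refl])
    fix i assume "i \<in> {a..<b}"
    then have "p!i = p!a" by (intro cc) auto
    then show "(cst - mu!i)^2 = (p!i - mu!i)^2" by (simp add: cst_def)
  qed
  have "(\<Sum>j<m. (v!j)^2) \<le> sq_norm (proj (S_down m) x)"
    by (rule cone_bound[OF lx vK]) (use ip0 e1 e2 in simp)
  then show ?thesis using e2 e3 by (simp add: m_def x_def)
qed

lemma blocks_char:
  assumes pK: "p \<in> S_up n" and T: "T \<in> const_blocks p"
  obtains a b where "T = {a..<b}" "a < b" "b \<le> n" "\<forall>i\<in>{a..<b}. p!i = p!a"
    "a = 0 \<or> p!(a-1) \<noteq> p!a" "b = n \<or> p!b \<noteq> p!a" "T = {j. j < n \<and> p!j = p!a}"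
proof -
  have lp: "length p = n" and sp: "sorted p" using pK by (auto simp: S_up_def)
  from T[unfolded const_blocks_def lp] obtain a b where T': "T = {a..<b}" "a < b" "b \<le> n" and c: "\<forall>i\<in>{a..<b}. p!i = p!a"
    and la: "a = 0 \<or> p!(a-1) \<noteq> p!a" and rb: "b = n \<or> p!b \<noteq> p!a"
    by blast
  have eqL: "{a..<b} = {j. j < n \<and> p!j = p!a}"
  proof safe
    fix j assume j: "j \<in> {a..<b}" then show "j < n" using T' by auto
    show "p!j = p!a" using c j by blast
  next
    fix j assume j: "j < n" "p!j = p!a"
    show "j \<in> {a..<b}"
    proof (rule ccontr)
      assume "j \<notin> {a..<b}"
      then consider "j < a" | "b \<le> j" by auto
      then show False
      proof cases
        case 1
        then have a0: "a > 0" by simp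
        have "p!j \<le> p!(a-1)" using 1 T' lp sp by (intro sorted_nth_mono) auto
        moreover have "p!(a-1) \<le> p!a" using a0 T' lp sp by (intro sorted_nth_mono) auto
        ultimately show False using la a0 j by auto
      next
        case 2
        then have bn: "b < n" using j by simp
        have "p!b \<le> p!j" using 2 j lp sp by (intro sorted_nth_mono) auto
        moreover have "p!(b-1) \<le> p!b" using bn lp sp by (intro sorted_nth_mono) auto
        moreover have "b - 1 \<in> {a..<b}" using T' by auto
        then have "p!(b-1) = p!a" using c by blast
        ultimately show False using rb bn j by auto
      qed
    qed
  qed
  show ?thesis by (rule that[OF T'(1,2,3) c la rb]) (simp add: T'(1) eqL)
qed

lemma blocks_cover:
  assumes pK: "p \<in> S_up n" and i: "i < n"
  shows "\<exists>T\<in>const_blocks p. i \<in> T"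
proof -
  have lp: "length p = n" and sp: "sorted p" using pK by (auto simp: S_up_def)
  define L where "L = {j. j < n \<and> p!j = p!i}"
  have fL: "finite L" unfolding L_def by simp
  have iL: "i \<in> L" using i by (simp add: L_def)
  define a where "a = Min L"
  define b where "b = Suc (Max L)"
  have aL: "a \<in> L" unfolding a_def using fL iL by (intro Min_in) auto
  have bL: "b - 1 \<in> L" unfolding b_def using fL iL by (simp add: Max_in[OF fL] del: Max_in) (metis Max_in empty_iff)
  have ai: "a \<le> i" unfolding a_def using fL iL by simp
  have ib: "i < b" unfolding b_def using fL iL by (simp add: le_imp_less_Suc)
  have bn: "b \<le> n" using bL ib unfolding L_def by auto
  have pa: "p!a = p!i" using aL by (simp add: L_def)
  have pb: "p!(b-1) = p!i" using bL by (simp add: L_def)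
  have c: "\<forall>j\<in>{a..<b}. p!j = p!a"
  proof
    fix j assume j: "j \<in> {a..<b}"
    have "p!a \<le> p!j" using j bn lp sp by (intro sorted_nth_mono) auto
    moreover have "p!j \<le> p!(b-1)" using j bn lp sp by (intro sorted_nth_mono) auto
    ultimately show "p!j = p!a" using pa pb by simp
  qed
  have la: "a = 0 \<or> p!(a-1) \<noteq> p!a"
  proof (rule ccontr)
    assume "\<not> (a = 0 \<or> p!(a-1) \<noteq> p!a)"
    then have "a - 1 \<in> L" "a > 0" using pa aL by (auto simp: L_def)
    then have "a \<le> a - 1" unfolding a_def using fL by simp
    then show False using \<open>a > 0\<close> by simp
  qed
  have rb: "b = n \<or> p!b \<noteq> p!a"
  proof (rule ccontr)
    assume "\<not> (b = n \<or> p!b \<noteq> p!a)"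
    then have "b \<in> L" using pa bn by (auto simp: L_def)
    then have "b \<le> Max L" using fL by simp
    then show False unfolding b_def by simp
  qed
  have blk: "{a..<b} \<in> const_blocks p" unfolding const_blocks_def
    apply (rule CollectI, rule exI[of _ a], rule exI[of _ b])
  proof (intro conjI refl)
    show "a < b" using ai ib by linarith
    show "b \<le> length p" using bn lp by simp
    show "b = length p \<or> p ! b \<noteq> p ! a" using rb lp by simp
  qed (fact c la)+
  have iab: "i \<in> {a..<b}" using ai ib by simp
  show ?thesis by (rule bexI[where P="\<lambda>T. i \<in> T", OF iab blk])
qed

lemma blocks_sum:
  assumes pK: "p \<in> S_up n"
  shows "(\<Sum>i<n. f i) = (\<Sum>T\<in>const_blocks p. \<Sum>i\<in>T. f i :: real)"
proof -
  have Lf: "\<exists>a. T = {j. j < n \<and> p!j = p!a}" if T: "T \<in> const_blocks p" for T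
  proof -
    obtain a b where "T = {a..<b}" "a < b" "b \<le> n" "\<forall>i\<in>{a..<b}. p!i = p!a"
      "a = 0 \<or> p!(a-1) \<noteq> p!a" "b = n \<or> p!b \<noteq> p!a" "T = {j. j < n \<and> p!j = p!a}"
      by (rule blocks_char[OF pK T])
    then show ?thesis by blast
  qed
  have sub: "T \<subseteq> {..<n}" if "T \<in> const_blocks p" for T
    using Lf[OF that] by auto
  have U: "\<Union>(const_blocks p) = {..<n}"
    using sub blocks_cover[OF pK] by blast
  have fin: "finite (const_blocks p)"
    by (rule finite_subset[of _ "Pow {..<n}"]) (use sub in auto)
  have disj: "\<forall>A\<in>const_blocks p. \<forall>B\<in>const_blocks p. A \<noteq> B \<longrightarrow> A \<inter> B = {}"
  proof (intro ballI impI)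
    fix A B assume A: "A \<in> const_blocks p" and B: "B \<in> const_blocks p" and ne: "A \<noteq> B"
    obtain a1 where A1: "A = {j. j < n \<and> p!j = p!a1}" using Lf[OF A] by blast
    obtain a2 where B1: "B = {j. j < n \<and> p!j = p!a2}" using Lf[OF B] by blast
    show "A \<inter> B = {}"
    proof (rule ccontr)
      assume "A \<inter> B \<noteq> {}"
      then obtain j where "j \<in> A" "j \<in> B" by blast
      then have "p!a1 = p!a2" using A1 B1 by auto
      then have "A = B" using A1 B1 by simp
      with ne show False by simp
    qed
  qed
  have "(\<Sum>i<n. f i) = sum f (\<Union>(const_blocks p))" using U by simp
  also have "\<dots> = (sum \<circ> sum) f (const_blocks p)"
    by (rule sum.Union_disjoint) (use sub disj in \<open>auto intro: finite_subset\<close>)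
  finally show ?thesis by simp
qed

theorem mainTheorem6:
  fixes n :: nat and mu xi :: "real list"
  assumes "n \<ge> 1"
    and "mu \<in> S_up n"
    and "length xi = n"
  shows "sq_norm (vdiff (proj (S_up n) (vadd mu xi)) mu)
     \<le> (\<Sum>T\<in>const_blocks (proj (S_up n) (vadd mu xi)).
           sq_norm (proj (S_down (card T)) (subvec xi T)))"
proof -
  define y where "y = vadd mu xi"
  define p where "p = proj (S_up n) y"
  have lmu: "length mu = n" using assms(2) by (simp add: S_up_def)
  have ly: "length y = n" using lmu assms(3) by (simp add: y_def vadd_def)
  have yd: "\<And>i. i < n \<Longrightarrow> y!i = mu!i + xi!i" using lmu assms(3) by (simp add: y_def vadd_def)
  have pm: "ismin (S_up n) y p" unfolding p_def by (rule proj_up[OF ly])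
  have pK: "p \<in> S_up n" using pm by (simp add: ismin_def)
  have lp: "length p = n" using pK by (simp add: S_up_def)
  have "sq_norm (vdiff p mu) = (\<Sum>i<n. (p!i - mu!i)^2)" using lp lmu by (simp add: sq_norm_vdiff)
  also have "\<dots> = (\<Sum>T\<in>const_blocks p. \<Sum>i\<in>T. (p!i - mu!i)^2)" by (rule blocks_sum[OF pK])
  also have "\<dots> \<le> (\<Sum>T\<in>const_blocks p. sq_norm (proj (S_down (card T)) (subvec xi T)))"
  proof (rule sum_mono)
    fix T assume T: "T \<in> const_blocks p"
    obtain a b where ab: "T = {a..<b}" "a < b" "b \<le> n" "\<forall>i\<in>{a..<b}. p!i = p!a"
      "a = 0 \<or> p!(a-1) \<noteq> p!a" "b = n \<or> p!b \<noteq> p!a" "T = {j. j < n \<and> p!j = p!a}"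
      by (rule blocks_char[OF pK T])
    have "(\<Sum>i\<in>{a..<b}. (p!i - mu!i)^2) \<le> sq_norm (proj (S_down (b-a)) (map ((!) xi) [a..<b]))"
      by (rule block_bound[OF pm ly assms(2,3) yd ab(2,3,4,5,6)])
    moreover have "subvec xi T = map ((!) xi) [a..<b]" by (simp add: subvec_def ab(1))
    moreover have "card T = b - a" by (simp add: ab(1))
    ultimately show "(\<Sum>i\<in>T. (p!i - mu!i)^2) \<le> sq_norm (proj (S_down (card T)) (subvec xi T))"
      by (simp add: ab(1))
  qed
  finally show ?thesis by (simp add: p_def y_def)
qed

end
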